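(* Let $G$ be a $\sigma$-compact locally compact Abelian group, $\Lambda\subset G$ a subset of a model set, and $F\subset G$ a finite nonempty set. Then $\Lambda+F$ is a subset of a model set.
   Context: A cut and project scheme $(G\times H,\widetilde L)$: $H$ a locally compact Abelian group, $\widetilde L\subset G\times H$ a discrete cocompact subgroup with $\pi_1|_{\widetilde L}$ injective and $\pi_2(\widetilde L)$ dense in $H$; $x^\star:=\pi_2((\pi_1|_{\widetilde L})^{-1}(x))$. A model set is $\Lambda(W):=\{x\in\pi_1(\widetilde L):x^\star\in W\}$ for some cut and project scheme and some precompact $W\subset H$ with nonempty interior. *)

theory Defs
  imports "HOL-Analysis.Analysis"
begin

text \<open>A (Hausdorff) locally compact Abelian group given by explicit data, with carrier
  the topspace of its topology. This carrier-based representation is used for the internal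
  space H, because H is existentially quantified in the notion of a model set.\<close>

record 'u lca_data =
  lca_top  :: "'u topology"
  lca_add  :: "'u \<Rightarrow> 'u \<Rightarrow> 'u"
  lca_zero :: "'u"
  lca_neg  :: "'u \<Rightarrow> 'u"

definition lca_group :: "'u lca_data \<Rightarrow> bool" where
  "lca_group H \<longleftrightarrow>
     (let C = topspace (lca_top H); p = lca_add H; z = lca_zero H; n = lca_neg H in
       z \<in> C \<and>
       (\<forall>a\<in>C. \<forall>b\<in>C. p a b \<in> C) \<and>
       (\<forall>a\<in>C. n a \<in> C) \<and>
       (\<forall>a\<in>C. \<forall>b\<in>C. \<forall>c\<in>C. p (p a b) c = p a (p b c)) \<and>
       (\<forall>a\<in>C. \<forall>b\<in>C. p a b = p b a) \<and>
       (\<forall>a\<in>C. p z a = a) \<and>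
       (\<forall>a\<in>C. p (n a) a = z) \<and>
       continuous_map (prod_topology (lca_top H) (lca_top H)) (lca_top H) (\<lambda>(a, b). p a b) \<and>
       continuous_map (lca_top H) (lca_top H) n \<and>
       Hausdorff_space (lca_top H) \<and>
       locally_compact_space (lca_top H))"

definition cps :: "'u lca_data \<Rightarrow> ('g::{topological_ab_group_add,t2_space} \<times> 'u) set \<Rightarrow> bool" where
  "cps H L \<longleftrightarrow>
     (let C = topspace (lca_top H); T = prod_topology (euclidean :: 'g topology) (lca_top H);
          padd = (\<lambda>p q. (fst p + fst q, lca_add H (snd p) (snd q))) in
       lca_group H \<and>
       L \<subseteq> UNIV \<times> C \<and>
       (0, lca_zero H) \<in> L \<and>
       (\<forall>p\<in>L. \<forall>q\<in>L. padd p q \<in> L) \<and>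
       (\<forall>p\<in>L. (- fst p, lca_neg H (snd p)) \<in> L) \<and>
       (\<forall>p\<in>L. \<exists>U. openin T U \<and> U \<inter> L = {p}) \<and>
       (\<exists>K. compactin T K \<and> {padd k l | k l. k \<in> K \<and> l \<in> L} = UNIV \<times> C) \<and>
       inj_on fst L \<and>
       (lca_top H) closure_of (snd ` L) = C)"

definition star_map :: "('g \<times> 'u) set \<Rightarrow> 'g \<Rightarrow> 'u" where
  "star_map L x = snd (THE p. p \<in> L \<and> fst p = x)"

definition model_set :: "('g \<times> 'u) set \<Rightarrow> 'u set \<Rightarrow> 'g set" where
  "model_set L W = {x \<in> fst ` L. star_map L x \<in> W}"

definition subset_of_model_set ::
    "'u itself \<Rightarrow> 'g::{topological_ab_group_add,t2_space} set \<Rightarrow> bool" where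
  "subset_of_model_set _ \<Lambda> \<longleftrightarrow>
     (\<exists>(H::'u lca_data) (L::('g \<times> 'u) set) W.
        cps H L \<and> W \<subseteq> topspace (lca_top H) \<and>
        compactin (lca_top H) ((lca_top H) closure_of W) \<and>
        (lca_top H) interior_of W \<noteq> {} \<and>
        \<Lambda> \<subseteq> model_set L W)"

end

theory Submission
  imports Defs
begin


lemma star_map_eq:
  assumes "p \<in> L" "inj_on fst L"
  shows "star_map L (fst p) = snd p"
proof -
  have "(THE q. q \<in> L \<and> fst q = fst p) = p"
    using assms by (intro the_equality) (auto simp: inj_on_def)
  then show ?thesis by (simp add: star_map_def)
qed

lemma model_set_memI:
  assumes "p \<in> L" "inj_on fst L" "snd p \<in> W"
  shows "fst p \<in> model_set L W"
  using assms star_map_eq[OF assms(1,2)] by (auto simp: model_set_def)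

lemma model_set_memD:
  assumes "x \<in> model_set L W"
  obtains p where "p \<in> L" "fst p = x" "star_map L x \<in> W"
  using assms by (auto simp: model_set_def)

lemma subset_of_model_set_mono:
  "subset_of_model_set TYPE('u) B \<Longrightarrow> A \<subseteq> B \<Longrightarrow> subset_of_model_set TYPE('u) A"
  unfolding subset_of_model_set_def by blast



lemma cps_unfold:
  fixes L :: "('g::{topological_ab_group_add,t2_space} \<times> 'u) set"
  assumes "cps H L"
  shows "lca_group H" "L \<subseteq> UNIV \<times> topspace (lca_top H)" "(0, lca_zero H) \<in> L"
   "\<And>p q. p \<in> L \<Longrightarrow> q \<in> L \<Longrightarrow> (fst p + fst q, lca_add H (snd p) (snd q)) \<in> L"
   "\<And>p. p\<in>L \<Longrightarrow> (- fst p, lca_neg H (snd p)) \<in> L"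
   "\<And>p. p\<in>L \<Longrightarrow> \<exists>U. openin (prod_topology (euclidean::'g topology) (lca_top H)) U \<and> U \<inter> L = {p}"
   "\<exists>K. compactin (prod_topology (euclidean::'g topology) (lca_top H)) K \<and> {(fst k + fst l, lca_add H (snd k) (snd l)) | k l. k \<in> K \<and> l \<in> L} = UNIV \<times> topspace (lca_top H)"
   "inj_on fst L" "(lca_top H) closure_of (snd ` L) = topspace (lca_top H)"
  using assms unfolding cps_def Let_def by auto

lemma transport:
  fixes H :: "'a lca_data" and L :: "('g::{topological_ab_group_add,t2_space} \<times> 'a) set"
    and e :: "'a \<Rightarrow> 'b"
  assumes cps: "cps H L" and W: "W \<subseteq> topspace (lca_top H)"
    "compactin (lca_top H) ((lca_top H) closure_of W)" "(lca_top H) interior_of W \<noteq> {}"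
    "\<Lambda> \<subseteq> model_set L W"
    and inj: "inj_on e (topspace (lca_top H))"
  shows "subset_of_model_set TYPE('b) \<Lambda>"
proof -
  define T where "T = lca_top H"
  define C where "C = topspace T"
  define p where "p = lca_add H"
  define z where "z = lca_zero H"
  define n where "n = lca_neg H"
  note cu = cps_unfold[OF cps, folded T_def C_def p_def z_def n_def]
  have grp: "z \<in> C" "\<And>a b. a\<in>C \<Longrightarrow> b\<in>C \<Longrightarrow> p a b \<in> C" "\<And>a. a\<in>C \<Longrightarrow> n a \<in> C"
    "\<And>a b c. a\<in>C \<Longrightarrow> b\<in>C \<Longrightarrow> c\<in>C \<Longrightarrow> p (p a b) c = p a (p b c)"
    "\<And>a b. a\<in>C \<Longrightarrow> b\<in>C \<Longrightarrow> p a b = p b a"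
    "\<And>a. a\<in>C \<Longrightarrow> p z a = a" "\<And>a. a\<in>C \<Longrightarrow> p (n a) a = z"
    "continuous_map (prod_topology T T) T (\<lambda>(a, b). p a b)"
    "continuous_map T T n" "Hausdorff_space T" "locally_compact_space T"
    using cu(1) unfolding lca_group_def Let_def T_def C_def p_def z_def n_def by auto
  define d where "d = inv_into C e"
  have de: "\<And>c. c \<in> C \<Longrightarrow> d (e c) = c" using inj by (simp add: d_def C_def T_def)
  define T2 where "T2 = pullback_topology (e ` C) d T"
  have top2: "topspace T2 = e ` C"
    unfolding T2_def topspace_pullback_topology using de by (auto simp: C_def)
  have hm: "homeomorphic_maps T T2 e d"
    unfolding homeomorphic_maps_def
  proof (intro conjI ballI)
    have "continuous_map T T (d \<circ> e)"
      by (rule continuous_map_eq[of _ _ id]) (auto simp: de C_def)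
    then show "continuous_map T T2 e"
      unfolding T2_def by (rule continuous_map_pullback') (auto simp: C_def)
    have "continuous_map T2 T (id \<circ> d)"
      unfolding T2_def by (rule continuous_map_pullback) simp
    then show "continuous_map T2 T d" by simp
    show "\<And>x. x \<in> topspace T \<Longrightarrow> d (e x) = x" using de C_def by auto
    show "\<And>y. y \<in> topspace T2 \<Longrightarrow> e (d y) = y" using de top2 by auto
  qed
  have hmap: "homeomorphic_map T T2 e" using hm homeomorphic_maps_imp_map by blast
  have ce: "continuous_map T T2 e" and cd: "continuous_map T2 T d"
    using hm by (auto simp: homeomorphic_maps_def)
  define H2 :: "'b lca_data" where "H2 = \<lparr>lca_top = T2, lca_add = (\<lambda>a b. e (p (d a) (d b))),
      lca_zero = e z, lca_neg = (\<lambda>a. e (n (d a)))\<rparr>"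
  define \<Phi> where "\<Phi> = (\<lambda>(x::'g,y). (x, e y))"
  have hmP: "homeomorphic_maps (prod_topology (euclidean::'g topology) T) (prod_topology euclidean T2) \<Phi> (\<lambda>(x,y). (id x, d y))"
  proof -
    have "homeomorphic_maps (euclidean::'g topology) euclidean (\<lambda>x. x) (\<lambda>x. x)"
      by (simp add: homeomorphic_maps_def)
    then show ?thesis
      unfolding \<Phi>_def using homeomorphic_maps_prod[of euclidean T euclidean T2 id e id d] hm
      unfolding id_def by blast
  qed
  then have hmPm: "homeomorphic_map (prod_topology (euclidean::'g topology) T) (prod_topology euclidean T2) \<Phi>"
    using homeomorphic_maps_imp_map by blast
  define L2 where "L2 = \<Phi> ` L"
  have LC: "L \<subseteq> UNIV \<times> C" using cu(2) by (simp add: C_def)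
  have injP: "inj_on \<Phi> (UNIV \<times> C)"
    using inj unfolding \<Phi>_def inj_on_def C_def T_def by auto
  have lg: "lca_group H2"
  proof -
    have c1: "continuous_map (prod_topology T2 T2) T2 (\<lambda>(a, b). e (p (d a) (d b)))"
    proof -
      have "continuous_map (prod_topology T2 T2) (prod_topology T T) (\<lambda>(a, b). (d a, d b))"
        using cd by (simp add: continuous_map_prod_top)
      then have "continuous_map (prod_topology T2 T2) T2 (e \<circ> (\<lambda>(a, b). p a b) \<circ> (\<lambda>(a, b). (d a, d b)))"
        using grp(8) ce by (meson continuous_map_compose)
      then show ?thesis by (simp add: o_def case_prod_beta split_beta')
    qed
    have c2: "continuous_map T2 T2 (\<lambda>a. e (n (d a)))"
      using continuous_map_compose[OF continuous_map_compose[OF cd grp(9)] ce] by (simp add: o_def)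
    have hs: "Hausdorff_space T2" "locally_compact_space T2"
      using grp(10,11) homeomorphic_Hausdorff_space homeomorphic_locally_compact_space
        homeomorphic_maps_imp_homeomorphic_space[OF hm] by blast+
    show ?thesis unfolding lca_group_def Let_def H2_def
      using c1 c2 hs grp(1-7) by (auto simp: top2 de)
  qed
  have injL2: "inj_on fst L2"
  proof (rule inj_onI)
    fix u v assume uv: "u \<in> L2" "v \<in> L2" "fst u = fst v"
    then obtain u' v' where uv': "u' \<in> L" "v' \<in> L" "u = \<Phi> u'" "v = \<Phi> v'" by (auto simp: L2_def)
    have f: "fst (\<Phi> w) = fst w" for w by (simp add: \<Phi>_def case_prod_beta)
    have "fst u' = fst v'" using uv(3) uv' f by simp
    then have "u' = v'" using cu(8) uv' by (meson inj_onD)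
    then show "u = v" using uv' by simp
  qed
  have cps2: "cps H2 L2"
    unfolding cps_def Let_def
  proof (intro conjI)
    show "lca_group H2" by (rule lg)
    show "L2 \<subseteq> UNIV \<times> topspace (lca_top H2)"
      using LC by (auto simp: L2_def \<Phi>_def H2_def top2)
    show "(0, lca_zero H2) \<in> L2"
      using cu(3) by (force simp: L2_def \<Phi>_def H2_def)
    show "\<forall>p\<in>L2. \<forall>q\<in>L2. (fst p + fst q, lca_add H2 (snd p) (snd q)) \<in> L2"
    proof (intro ballI)
      fix a b assume "a \<in> L2" "b \<in> L2"
      then obtain a' b' where ab: "a' \<in> L" "b' \<in> L" "a = \<Phi> a'" "b = \<Phi> b'" by (auto simp: L2_def)
      then have "snd a' \<in> C" "snd b' \<in> C" using LC by auto
      then show "(fst a + fst b, lca_add H2 (snd a) (snd b)) \<in> L2"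
        using cu(4)[OF ab(1,2)] ab unfolding L2_def H2_def \<Phi>_def
        by (auto simp: case_prod_beta de p_def intro!: image_eqI[where x="(fst a' + fst b', p (snd a') (snd b'))"])
    qed
    show "\<forall>a\<in>L2. (- fst a, lca_neg H2 (snd a)) \<in> L2"
    proof (intro ballI)
      fix a assume "a \<in> L2"
      then obtain a' where ab: "a' \<in> L" "a = \<Phi> a'" by (auto simp: L2_def)
      then have "snd a' \<in> C" using LC by auto
      then show "(- fst a, lca_neg H2 (snd a)) \<in> L2"
        using cu(5)[OF ab(1)] ab unfolding L2_def H2_def \<Phi>_def
        by (auto simp: case_prod_beta de n_def intro!: image_eqI[where x="(- fst a', n (snd a'))"])
    qed
    show "\<forall>a\<in>L2. \<exists>U. openin (prod_topology euclidean (lca_top H2)) U \<and> U \<inter> L2 = {a}"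
    proof
      fix a assume "a \<in> L2"
      then obtain a' where ab: "a' \<in> L" "a = \<Phi> a'" by (auto simp: L2_def)
      obtain U where U: "openin (prod_topology euclidean T) U" "U \<inter> L = {a'}"
        using cu(6)[OF ab(1)] by (auto simp: T_def)
      have Us: "U \<subseteq> UNIV \<times> C" using openin_subset[OF U(1)] by (simp add: C_def)
      have "openin (prod_topology euclidean T2) (\<Phi> ` U)"
        using homeomorphic_map_openness[OF hmPm] openin_subset[OF U(1)] U(1) by blast
      moreover have "\<Phi> ` U \<inter> L2 = {a}"
      proof -
        have "\<Phi> ` U \<inter> \<Phi> ` L = \<Phi> ` (U \<inter> L)"
          using inj_on_image_Int[OF injP Us LC] by simp
        then show ?thesis using U(2) ab by (simp add: L2_def)
      qed
      ultimately show "\<exists>U. openin (prod_topology euclidean (lca_top H2)) U \<and> U \<inter> L2 = {a}"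
        by (auto simp: H2_def)
    qed
    show "\<exists>K. compactin (prod_topology euclidean (lca_top H2)) K \<and>
      {(fst k + fst l, lca_add H2 (snd k) (snd l)) |k l. k \<in> K \<and> l \<in> L2} = UNIV \<times> topspace (lca_top H2)"
    proof -
      obtain K where K: "compactin (prod_topology euclidean T) K"
        "{(fst k + fst l, p (snd k) (snd l)) |k l. k \<in> K \<and> l \<in> L} = UNIV \<times> C"
        using cu(7) by (auto simp: T_def C_def p_def)
      have KC: "K \<subseteq> UNIV \<times> C" using compactin_subset_topspace[OF K(1)] by (simp add: C_def)
      have "compactin (prod_topology euclidean T2) (\<Phi> ` K)"
        using homeomorphic_map_compactness[OF hmPm] compactin_subset_topspace[OF K(1)] K(1) by blast
      moreover have "{(fst k + fst l, lca_add H2 (snd k) (snd l)) |k l. k \<in> \<Phi> ` K \<and> l \<in> L2} = UNIV \<times> e ` C"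
      proof -
        have eq: "(fst k + fst l, lca_add H2 (snd k) (snd l)) = \<Phi> (fst k' + fst l', p (snd k') (snd l'))"
          if "k = \<Phi> k'" "l = \<Phi> l'" "k' \<in> UNIV \<times> C" "l' \<in> UNIV \<times> C" for k l k' l'
          using that by (auto simp: \<Phi>_def H2_def de case_prod_beta)
        have "{(fst k + fst l, lca_add H2 (snd k) (snd l)) |k l. k \<in> \<Phi> ` K \<and> l \<in> L2}
            = \<Phi> ` {(fst k + fst l, p (snd k) (snd l)) |k l. k \<in> K \<and> l \<in> L}"
          (is "?A = ?B")
        proof
          show "?A \<subseteq> ?B"
          proof
            fix x assume "x \<in> ?A"
            then obtain k l where kl: "x = (fst k + fst l, lca_add H2 (snd k) (snd l))" "k \<in> \<Phi> ` K" "l \<in> L2"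
              by blast
            then obtain k' l' where kl': "k' \<in> K" "l' \<in> L" "k = \<Phi> k'" "l = \<Phi> l'" unfolding L2_def by blast
            then have "x = \<Phi> (fst k' + fst l', p (snd k') (snd l'))"
              using eq[of k k' l l'] KC LC kl by blast
            then show "x \<in> ?B" using kl' by blast
          qed
          show "?B \<subseteq> ?A"
          proof
            fix x assume "x \<in> ?B"
            then obtain k' l' where kl: "k' \<in> K" "l' \<in> L" "x = \<Phi> (fst k' + fst l', p (snd k') (snd l'))"
              by auto
            then have "x = (fst (\<Phi> k') + fst (\<Phi> l'), lca_add H2 (snd (\<Phi> k')) (snd (\<Phi> l')))"
              using eq[of "\<Phi> k'" k' "\<Phi> l'" l', OF refl refl subsetD[OF KC kl(1)] subsetD[OF LC kl(2)]] kl(3) by simp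
            moreover have "\<Phi> k' \<in> \<Phi> ` K" "\<Phi> l' \<in> L2" using kl by (auto simp: L2_def)
            ultimately show "x \<in> ?A" by blast
          qed
        qed
        also have "\<dots> = UNIV \<times> e ` C" using K(2) by (auto simp: \<Phi>_def)
        finally show ?thesis .
      qed
      ultimately show ?thesis by (auto simp: H2_def top2)
    qed
    show "inj_on fst L2" by (rule injL2)
    show "lca_top H2 closure_of snd ` L2 = topspace (lca_top H2)"
    proof -
      have "snd ` L2 = e ` (snd ` L)" by (force simp: L2_def \<Phi>_def)
      moreover have "snd ` L \<subseteq> topspace T" using LC C_def by auto
      ultimately have "T2 closure_of snd ` L2 = e ` (T closure_of (snd ` L))"
        using homeomorphic_map_closure_of[OF hmap] by simp
      then show ?thesis using cu(9) by (simp add: H2_def top2 T_def C_def)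
    qed
  qed
  show ?thesis
    unfolding subset_of_model_set_def
  proof (intro exI conjI)
    show "cps H2 L2" by (rule cps2)
    show "e ` W \<subseteq> topspace (lca_top H2)" using W(1) by (auto simp: H2_def top2 C_def T_def)
    have "lca_top H2 closure_of (e ` W) = e ` (T closure_of W)"
      using homeomorphic_map_closure_of[OF hmap] W(1) by (simp add: H2_def T_def)
    then show "compactin (lca_top H2) (lca_top H2 closure_of e ` W)"
      using homeomorphic_map_compactness[OF hmap, of "T closure_of W"] W(2) closure_of_subset_topspace[of T W]
      by (simp add: H2_def T_def)
    have "lca_top H2 interior_of (e ` W) = e ` (T interior_of W)"
      using homeomorphic_map_interior_of[OF hmap] W(1) by (simp add: H2_def T_def)
    then show "lca_top H2 interior_of e ` W \<noteq> {}" using W(3) by (simp add: T_def)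
    show "\<Lambda> \<subseteq> model_set L2 (e ` W)"
    proof
      fix x assume "x \<in> \<Lambda>"
      then have "x \<in> model_set L W" using W(4) by blast
      then obtain q where q: "q \<in> L" "fst q = x" "star_map L x \<in> W" by (rule model_set_memD)
      have "star_map L x = snd q" using star_map_eq[OF q(1) cu(8)] q(2) by simp
      have "inj_on fst L2" by (rule injL2)
      moreover have "\<Phi> q \<in> L2" using q by (simp add: L2_def)
      moreover have "snd (\<Phi> q) \<in> e ` W" using q \<open>star_map L x = snd q\<close> by (auto simp: \<Phi>_def case_prod_beta)
      ultimately have "fst (\<Phi> q) \<in> model_set L2 (e ` W)" using model_set_memI by metis
      then show "x \<in> model_set L2 (e ` W)" using q by (simp add: \<Phi>_def case_prod_beta)
    qed
  qed
qed



lemma card_embed: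
  fixes H :: "'a lca_data" and L :: "('g::{topological_ab_group_add,t2_space} \<times> 'a) set"
  assumes cps: "cps H L"
  shows "\<exists>e :: 'a \<Rightarrow> ('g \<Rightarrow> real) set. inj_on e (topspace (lca_top H))"
proof -
  define T where "T = lca_top H"
  note cu = cps_unfold[OF cps, folded T_def]
  have haus: "Hausdorff_space T" using cu(1) unfolding lca_group_def Let_def T_def by auto
  define N where "N h = {fst ` (L \<inter> (UNIV \<times> V)) | V. openin T V \<and> h \<in> V}" for h
  define e where "e h = (\<lambda>S. indicator S :: 'g \<Rightarrow> real) ` N h" for h
  have indinj: "inj (\<lambda>S. indicator S :: 'g \<Rightarrow> real)"
  proof (rule injI)
    fix A B :: "'g set" assume AB: "(indicator A :: 'g \<Rightarrow> real) = indicator B"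
    show "A = B"
    proof (rule set_eqI)
      fix x have "(indicator A x :: real) = indicator B x" using AB by simp
      then show "x \<in> A \<longleftrightarrow> x \<in> B" by (cases "x \<in> A"; cases "x \<in> B") (auto simp: indicator_def)
    qed
  qed
  show ?thesis
  proof (intro exI inj_onI)
    fix h h' assume hh: "h \<in> topspace (lca_top H)" "h' \<in> topspace (lca_top H)" "e h = e h'"
    have NN: "N h = N h'" using hh(3) inj_image_eq_iff[OF indinj] unfolding e_def by blast
    show "h = h'"
    proof (rule ccontr)
      assume "h \<noteq> h'"
      have hd: "\<forall>x y. x \<in> topspace T \<and> y \<in> topspace T \<and> x \<noteq> y
              \<longrightarrow> (\<exists>U V. openin T U \<and> openin T V \<and> x \<in> U \<and> y \<in> V \<and> disjnt U V)"
        using haus unfolding Hausdorff_space_def .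
      have "h \<in> topspace T" "h' \<in> topspace T" using hh by (simp_all add: T_def)
      then have "\<exists>U V. openin T U \<and> openin T V \<and> h \<in> U \<and> h' \<in> V \<and> disjnt U V"
        using hd \<open>h \<noteq> h'\<close> by blast
      then obtain V V' where VV: "openin T V" "openin T V'" "h \<in> V" "h' \<in> V'" "disjnt V V'"
        by blast
      have "fst ` (L \<inter> (UNIV \<times> V)) \<in> N h" using VV unfolding N_def by blast
      then have "fst ` (L \<inter> (UNIV \<times> V)) \<in> N h'" using NN by simp
      then obtain V2 where V2: "openin T V2" "h' \<in> V2" "fst ` (L \<inter> (UNIV \<times> V)) = fst ` (L \<inter> (UNIV \<times> V2))"
        unfolding N_def by blast
      have o: "openin T (V2 \<inter> V')" using V2 VV by auto
      have "(V2 \<inter> V') \<inter> T closure_of (snd ` L) \<noteq> {}"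
        using cu(9) V2 VV hh openin_subset[OF VV(2)] by (auto simp: T_def)
      then have "(V2 \<inter> V') \<inter> snd ` L \<noteq> {}" using openin_Int_closure_of_eq_empty[OF o] by blast
      then obtain l where l: "l \<in> L" "snd l \<in> V2" "snd l \<in> V'" by auto
      then have "fst l \<in> fst ` (L \<inter> (UNIV \<times> V2))" by (auto intro!: image_eqI[where x=l] simp: mem_Times_iff)
      then have "fst l \<in> fst ` (L \<inter> (UNIV \<times> V))" using V2(3) by simp
      then obtain l' where "l' \<in> L \<inter> (UNIV \<times> V)" "fst l = fst l'" by (rule imageE)
      then have l': "l' \<in> L" "snd l' \<in> V" "fst l' = fst l" by (auto simp: mem_Times_iff)
      then have "l' = l" using cu(8) l by (meson inj_onD)
      then show False using l l' VV(5) by (auto simp: disjnt_def)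
    qed
  qed
qed

lemma to_big:
  fixes \<Lambda> :: "'g::{topological_ab_group_add,t2_space} set"
  assumes "subset_of_model_set TYPE('a) \<Lambda>"
  shows "subset_of_model_set TYPE(('g \<Rightarrow> real) set) \<Lambda>"
proof -
  obtain H :: "'a lca_data" and L :: "('g \<times> 'a) set" and W where
    h: "cps H L" "W \<subseteq> topspace (lca_top H)"
        "compactin (lca_top H) ((lca_top H) closure_of W)"
        "(lca_top H) interior_of W \<noteq> {}" "\<Lambda> \<subseteq> model_set L W"
    using assms unfolding subset_of_model_set_def by blast
  obtain e :: "'a \<Rightarrow> ('g \<Rightarrow> real) set" where "inj_on e (topspace (lca_top H))"
    using card_embed[OF h(1)] by blast
  then show ?thesis using transport[OF h] by blast
qed



locale abg =
  fixes C :: "'a set" and p :: "'a \<Rightarrow> 'a \<Rightarrow> 'a" and z :: 'a and n :: "'a \<Rightarrow> 'a"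
  assumes zC [simp]: "z \<in> C" and pC [simp]: "a\<in>C \<Longrightarrow> b\<in>C \<Longrightarrow> p a b \<in> C"
    and nC [simp]: "a \<in> C \<Longrightarrow> n a \<in> C"
    and assoc: "a\<in>C \<Longrightarrow> b\<in>C \<Longrightarrow> c\<in>C \<Longrightarrow> p (p a b) c = p a (p b c)"
    and comm: "a\<in>C \<Longrightarrow> b\<in>C \<Longrightarrow> p a b = p b a"
    and lid [simp]: "a\<in>C \<Longrightarrow> p z a = a"
    and linv [simp]: "a\<in>C \<Longrightarrow> p (n a) a = z"
begin

lemma rid [simp]: "a\<in>C \<Longrightarrow> p a z = a" using comm[of a z] by simp
lemma rinv [simp]: "a\<in>C \<Longrightarrow> p a (n a) = z" using comm[of a "n a"] by simp
lemma lcomm: "a\<in>C \<Longrightarrow> b\<in>C \<Longrightarrow> c\<in>C \<Longrightarrow> p a (p b c) = p b (p a c)"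
  by (metis assoc comm)

lemma cancel: assumes "a\<in>C" "b\<in>C" "c\<in>C" "p a b = p a c" shows "b = c"
proof -
  have "p (p (n a) a) b = p (p (n a) a) c" using assms by (simp only: assoc nC)
  then show ?thesis using assms by simp
qed

lemma inv_unique: assumes "a\<in>C" "b\<in>C" "p a b = z" shows "b = n a"
  using cancel[of a b "n a"] assms by simp

lemma n_z [simp]: "n z = z" using inv_unique[of z z] by simp
lemma nn [simp]: "a\<in>C \<Longrightarrow> n (n a) = a" using inv_unique[of "n a" a] by simp
lemma n_p: assumes "a\<in>C" "b\<in>C" shows "n (p a b) = p (n a) (n b)"
proof -
  have "p (p a b) (p (n a) (n b)) = z"
    using assms by (metis assoc lcomm nC pC rid rinv)
  then show ?thesis using inv_unique[of "p a b" "p (n a) (n b)"] assms by simp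
qed

definition hm :: "int \<Rightarrow> 'a \<Rightarrow> 'a" where
  "hm k x = (if 0 \<le> k then (p x ^^ nat k) z else n ((p x ^^ nat (-k)) z))"

lemma pow_C [simp]: "x \<in> C \<Longrightarrow> (p x ^^ m) z \<in> C"
  by (induction m) auto

lemma hmC [simp]: "x \<in> C \<Longrightarrow> hm k x \<in> C"
  by (simp add: hm_def)

lemma hm_0 [simp]: "hm 0 x = z" by (simp add: hm_def)
lemma hm_1 [simp]: "x \<in> C \<Longrightarrow> hm 1 x = x" by (simp add: hm_def)

lemma hm_succ: assumes "x \<in> C" shows "hm (k+1) x = p (hm k x) x"
proof (cases "0 \<le> k")
  case True
  then have "nat (k+1) = Suc (nat k)" by simp
  then show ?thesis using True assms by (simp add: hm_def comm)
next
  case False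
  define m where "m = nat (-k - 1)"
  have k: "k = - int m - 1" using False by (simp add: m_def)
  show ?thesis
  proof (cases "m = 0")
    case True
    then show ?thesis using assms by (simp add: hm_def k)
  next
    case False
    then have "nat (-(k+1)) = m" "nat (-k) = Suc m" using k by auto
    moreover have "\<not> 0 \<le> k+1" using k False by simp
    moreover have "n ((p x ^^ m) z) = p (n x) (p (n ((p x ^^ m) z)) x)"
      using lcomm[of "n x" "n ((p x ^^ m) z)" x] assms by simp
    ultimately show ?thesis using \<open>\<not> 0 \<le> k\<close> assms
      by (simp add: hm_def n_p assoc)
  qed
qed

lemma hm_pred: assumes "x \<in> C" shows "hm (k - 1) x = p (hm k x) (n x)"
proof -
  have "hm k x = p (hm (k-1) x) x" using hm_succ[OF assms, of "k-1"] by simp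
  then show ?thesis using assms by (simp add: assoc)
qed

lemma hm_add: assumes "x \<in> C" shows "hm (a+b) x = p (hm a x) (hm b x)"
proof (induction b rule: int_induct[where k=0])
  case base
  then show ?case using assms by simp
next
  case (step1 i)
  then show ?case using assms hm_succ[of x "a+i"] hm_succ[of x i]
    by (simp add: add.assoc[symmetric] assoc)
next
  case (step2 i)
  then show ?case using assms hm_pred[of x "a+i"] hm_pred[of x i]
    by (simp add: diff_conv_add_uminus add.assoc[symmetric] assoc del: add_uminus_conv_diff)
qed

lemma hm_neg: assumes "x \<in> C" shows "hm (-k) x = n (hm k x)"
proof -
  have "p (hm k x) (hm (-k) x) = z" using hm_add[OF assms, of k "-k"] by simp
  then show ?thesis using inv_unique assms by simp
qed

lemma hm_z [simp]: "hm k z = z"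
proof -
  have "(p z ^^ m) z = z" for m by (induction m) auto
  then show ?thesis by (simp add: hm_def)
qed

end

interpretation gA: abg "UNIV::'a::ab_group_add set" "(+)" 0 uminus
  by unfold_locales (auto simp: add.assoc add.commute)

lemma gA_test: "gA.hm (a+b) (t::'a::ab_group_add) = gA.hm a t + gA.hm b t"
  by (simp add: gA.hm_add)



lemma cont_prod_discrete:
  assumes "\<And>v. v \<in> S \<Longrightarrow> continuous_map X Y (\<lambda>u. f (u,v))"
  shows "continuous_map (prod_topology X (discrete_topology S)) Y f"
  unfolding continuous_map_def
proof (intro conjI allI impI)
  show "f \<in> topspace (prod_topology X (discrete_topology S)) \<rightarrow> topspace Y"
    using assms by (auto simp: continuous_map_def Pi_iff)
  fix U assume U: "openin Y U"
  have eq: "{x \<in> topspace (prod_topology X (discrete_topology S)). f x \<in> U}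
      = \<Union>((\<lambda>v. {u \<in> topspace X. f (u,v) \<in> U} \<times> {v}) ` S)" by auto
  show "openin (prod_topology X (discrete_topology S)) {x \<in> topspace (prod_topology X (discrete_topology S)). f x \<in> U}"
    unfolding eq
  proof (rule openin_Union)
    fix A assume "A \<in> (\<lambda>v. {u \<in> topspace X. f (u,v) \<in> U} \<times> {v}) ` S"
    then obtain v where v: "v \<in> S" "A = {u \<in> topspace X. f (u,v) \<in> U} \<times> {v}" by auto
    have "openin X {u \<in> topspace X. f (u,v) \<in> U}"
      using openin_continuous_map_preimage[OF assms[OF v(1)] U] .
    then show "openin (prod_topology X (discrete_topology S)) A"
      using v by (auto simp: openin_prod_Times_iff)
  qed
qed

lemma int_divsplit: "(x::int) div q + (x mod q + d) div q = (x + d) div q"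
proof (cases "q = 0")
  case True then show ?thesis by simp
next
  case False
  have "x + d = (x mod q + d) + (x div q) * q" by (metis add.commute add.left_commute mult_div_mod_eq mult.commute)
  then have "(x + d) div q = ((x mod q + d) + (x div q) * q) div q" by simp
  also have "\<dots> = x div q + (x mod q + d) div q" by (rule div_mult_self1[OF False])
  finally show ?thesis by simp
qed

lemma (in abg) ac1: "a\<in>C \<Longrightarrow> b\<in>C \<Longrightarrow> c\<in>C \<Longrightarrow> u\<in>C \<Longrightarrow> v\<in>C \<Longrightarrow>
  p (p (p (p a b) u) c) v = p (p a (p b c)) (p u v)"
  by (metis assoc comm pC)
lemma (in abg) ac2: "a\<in>C \<Longrightarrow> b\<in>C \<Longrightarrow> c\<in>C \<Longrightarrow> u\<in>C \<Longrightarrow> v\<in>C \<Longrightarrow>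
  p (p a (p (p b c) u)) v = p (p a (p b c)) (p u v)"
  by (metis assoc pC)
lemma (in abg) ac3: "a\<in>C \<Longrightarrow> u\<in>C \<Longrightarrow> p (p (p (n a) (n u)) a) u = z"
  by (metis assoc lcomm nC pC rinv linv rid)

locale stp =
  fixes H :: "'a lca_data" and L :: "('g::{topological_ab_group_add,t2_space} \<times> 'a) set" and t :: 'g
  assumes cps: "cps H L"
begin

abbreviation "T \<equiv> lca_top H"
abbreviation "C \<equiv> topspace (lca_top H)"
abbreviation "p \<equiv> lca_add H"
abbreviation "z \<equiv> lca_zero H"
abbreviation "n \<equiv> lca_neg H"

lemmas cu = cps_unfold[OF cps]

lemma grp: "continuous_map (prod_topology T T) T (\<lambda>(a, b). p a b)"
    "continuous_map T T n" "Hausdorff_space T" "locally_compact_space T"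
  using cu(1) unfolding lca_group_def Let_def by auto

sublocale Hg: abg C p z n
  using cu(1) unfolding lca_group_def Let_def by unfold_locales auto

definition "Qn = {k::nat. 0 < k \<and> gA.hm (int k) t \<in> fst ` L}"
definition "q = (if Qn = {} then 0 else int (LEAST k. k \<in> Qn))"
definition "R = {a::int. q = 0 \<or> (0 \<le> a \<and> a < q)}"
definition "s = (if q = 0 then z else star_map L (gA.hm q t))"
definition "cr k = Hg.hm k s"

lemma star_in: assumes "x \<in> fst ` L" shows "(x, star_map L x) \<in> L"
proof -
  obtain l where "l \<in> L" "fst l = x" using assms by auto
  then show ?thesis using star_map_eq[OF _ cu(8), of l] by auto
qed

lemma q_nonneg: "0 \<le> q" by (simp add: q_def)

lemma q_pos_mem: assumes "q \<noteq> 0" shows "gA.hm q t \<in> fst ` L"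
proof -
  have "Qn \<noteq> {}" using assms by (auto simp: q_def)
  then have m: "(LEAST k. k \<in> Qn) \<in> Qn" by (meson LeastI ex_in_conv)
  have "q = int (LEAST k. k \<in> Qn)" using \<open>Qn \<noteq> {}\<close> by (simp add: q_def)
  then show ?thesis using m unfolding Qn_def by simp
qed

lemma qs_L: "(gA.hm q t, s) \<in> L"
proof (cases "q = 0")
  case True then show ?thesis using cu(3) by (simp add: s_def)
next
  case False then show ?thesis using star_in[OF q_pos_mem[OF False]] by (simp add: s_def)
qed

lemma sC [simp]: "s \<in> C" using qs_L cu(2) by auto
lemma crC [simp]: "cr k \<in> C" by (simp add: cr_def)

lemma q_min: assumes "0 < d" "q = 0 \<or> d < q" shows "gA.hm d t \<notin> fst ` L"
proof
  assume a: "gA.hm d t \<in> fst ` L"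
  then have "nat d \<in> Qn" using assms by (simp add: Qn_def)
  then have "Qn \<noteq> {}" by auto
  then have "q = int (LEAST k. k \<in> Qn)" by (simp add: q_def)
  moreover have "(LEAST k. k \<in> Qn) \<le> nat d" using \<open>nat d \<in> Qn\<close> by (rule Least_le)
  moreover have "(LEAST k. k \<in> Qn) \<in> Qn" using \<open>nat d \<in> Qn\<close> by (rule LeastI)
  ultimately show False using assms by (auto simp: Qn_def)
qed

lemma negL: "x \<in> fst ` L \<Longrightarrow> -x \<in> fst ` L"
  using cu(5) by force
lemma addL: "x \<in> fst ` L \<Longrightarrow> y \<in> fst ` L \<Longrightarrow> x + y \<in> fst ` L"
proof -
  assume "x \<in> fst ` L" "y \<in> fst ` L"
  then obtain a b where "a \<in> L" "b \<in> L" "x = fst a" "y = fst b" by auto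
  then show ?thesis using cu(4)[of a b] by force
qed

lemma R_eq: assumes "a \<in> R" "b \<in> R" "gA.hm (a - b) t \<in> fst ` L" shows "a = b"
proof (rule ccontr)
  assume "a \<noteq> b"
  then consider "a > b" | "b > a" by linarith
  then show False
  proof cases
    case 1
    then show False using q_min[of "a - b"] assms by (auto simp: R_def)
  next
    case 2
    have "gA.hm (b - a) t = - gA.hm (a - b) t" using gA.hm_neg[of t "a - b"] by simp
    then have "gA.hm (b - a) t \<in> fst ` L" using negL[OF assms(3)] by simp
    then show False using q_min[of "b - a"] assms 2 by (auto simp: R_def)
  qed
qed

lemma mod_R [simp]: "x mod q \<in> R"
  using q_nonneg by (cases "q = 0") (auto simp: R_def)

lemma R_mod: "a \<in> R \<Longrightarrow> a mod q = a" "a \<in> R \<Longrightarrow> a div q = 0"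
  by (auto simp: R_def)

lemma zero_R [simp]: "0 \<in> R" using q_nonneg by (auto simp: R_def)

lemma jq_L: "(gA.hm (j * q) t, cr j) \<in> L"
proof (induction j rule: int_induct[where k=0])
  case base
  then show ?case using cu(3) by (simp add: cr_def)
next
  case (step1 i)
  have "gA.hm ((i+1) * q) t = gA.hm (i*q) t + gA.hm q t" by (simp add: gA.hm_add distrib_right)
  moreover have "cr (i+1) = p (cr i) s" by (simp add: cr_def Hg.hm_succ)
  ultimately show ?case using cu(4)[OF step1(2) qs_L] by simp
next
  case (step2 i)
  have "gA.hm ((i-1) * q) t = gA.hm (i*q) t + - gA.hm q t"
    using gA.hm_add[of t "i*q" "-q"] gA.hm_neg[of t q] by (simp add: left_diff_distrib)
  moreover have "cr (i-1) = p (cr i) (n s)" by (simp add: cr_def Hg.hm_pred)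
  ultimately show ?case using cu(4)[OF step2(2) cu(5)[OF qs_L]] by simp
qed

end


context stp begin

definition "TT = prod_topology T (discrete_topology R)"
definition "addp u v = (p (p (fst u) (fst v)) (cr ((snd u + snd v) div q)), (snd u + snd v) mod q)"
definition "negp u = (p (n (fst u)) (n (cr ((snd u + (- snd u) mod q) div q))), (- snd u) mod q)"
definition "H' = \<lparr>lca_top = TT, lca_add = addp, lca_zero = (z, 0::int), lca_neg = negp\<rparr>"

lemma topTT: "topspace TT = C \<times> R" by (simp add: TT_def)

lemma transl_cont: "c \<in> C \<Longrightarrow> continuous_map T T (\<lambda>w. p w c)"
proof -
  assume c: "c \<in> C"
  have "continuous_map T (prod_topology T T) (\<lambda>w. (w, c))"
    using c by (intro continuous_map_pairedI) auto
  then have "continuous_map T T ((\<lambda>(a, b). p a b) \<circ> (\<lambda>w. (w, c)))"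
    using grp(1) by (rule continuous_map_compose)
  then show ?thesis by (simp add: o_def)
qed

lemma addp_cont: "continuous_map (prod_topology TT TT) TT (\<lambda>(u, v). addp u v)"
proof -
  define g where "g = (\<lambda>(hh::'a\<times>'a, ab::int\<times>int). (p (p (fst hh) (snd hh)) (cr ((fst ab + snd ab) div q)), (fst ab + snd ab) mod q))"
  define r where "r = (\<lambda>(u::'a\<times>int, v::'a\<times>int). ((fst u, fst v), (snd u, snd v)))"
  have f1: "continuous_map (prod_topology TT TT) T (\<lambda>x. fst (fst x))"
    using continuous_map_compose[OF continuous_map_fst continuous_map_fst] by (simp add: o_def TT_def)
  have f2: "continuous_map (prod_topology TT TT) T (\<lambda>x. fst (snd x))"
    using continuous_map_compose[OF continuous_map_snd continuous_map_fst] by (simp add: o_def TT_def)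
  have f3: "continuous_map (prod_topology TT TT) (discrete_topology R) (\<lambda>x. snd (fst x))"
    using continuous_map_compose[OF continuous_map_fst continuous_map_snd] by (simp add: o_def TT_def)
  have f4: "continuous_map (prod_topology TT TT) (discrete_topology R) (\<lambda>x. snd (snd x))"
    using continuous_map_compose[OF continuous_map_snd continuous_map_snd] by (simp add: o_def TT_def)
  have "continuous_map (prod_topology TT TT) (prod_topology (prod_topology T T) (discrete_topology (R \<times> R))) r"
    unfolding r_def case_prod_beta prod_topology_discrete_topology
    using f1 f2 f3 f4 by (intro continuous_map_pairedI)
  moreover have "continuous_map (prod_topology (prod_topology T T) (discrete_topology (R \<times> R))) TT g"
  proof (rule cont_prod_discrete)
    fix ab assume "ab \<in> R \<times> R"
    have "continuous_map (prod_topology T T) T (\<lambda>hh. p (p (fst hh) (snd hh)) (cr ((fst ab + snd ab) div q)))"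
      using continuous_map_compose[OF grp(1) transl_cont[OF crC]] by (simp add: o_def case_prod_beta)
    then show "continuous_map (prod_topology T T) TT (\<lambda>u. g (u, ab))"
      unfolding g_def TT_def by (auto intro!: continuous_map_pairedI)
  qed
  ultimately have "continuous_map (prod_topology TT TT) TT (g \<circ> r)" by (rule continuous_map_compose)
  moreover have "g \<circ> r = (\<lambda>(u, v). addp u v)"
    by (auto simp: g_def r_def addp_def fun_eq_iff)
  ultimately show ?thesis by simp
qed

lemma negp_cont: "continuous_map TT TT negp"
  unfolding TT_def
proof (rule cont_prod_discrete)
  fix a assume "a \<in> R"
  have "continuous_map T T (\<lambda>h. p (n h) (n (cr ((a + (- a) mod q) div q))))"
    using continuous_map_compose[OF grp(2) transl_cont[OF Hg.nC[OF crC]]] by (simp add: o_def)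
  then show "continuous_map T (prod_topology T (discrete_topology R)) (\<lambda>u. negp (u, a))"
    unfolding negp_def by (auto intro!: continuous_map_pairedI)
qed

lemma lg': "lca_group H'"
  unfolding lca_group_def Let_def H'_def
proof (simp only: lca_data.simps, intro conjI ballI)
  show "(z, 0) \<in> topspace TT" by (simp add: topTT)
  show "continuous_map (prod_topology TT TT) TT (\<lambda>(a, b). addp a b)" by (rule addp_cont)
  show "continuous_map TT TT negp" by (rule negp_cont)
  show "Hausdorff_space TT" using grp(3) by (simp add: TT_def Hausdorff_space_prod_topology)
  show "locally_compact_space TT" using grp(4)
    by (simp add: TT_def locally_compact_space_prod_topology locally_compact_space_discrete_topology)
  fix a b c assume abc: "a \<in> topspace TT" "b \<in> topspace TT" "c \<in> topspace TT"
  then have m: "fst a \<in> C" "fst b \<in> C" "fst c \<in> C" "snd a \<in> R" "snd b \<in> R" "snd c \<in> R"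
    by (auto simp: topTT)
  show "addp a b \<in> topspace TT" using m by (simp add: topTT addp_def)
  show "negp a \<in> topspace TT" using m by (simp add: topTT negp_def)
  show "addp a b = addp b a" by (simp add: addp_def Hg.comm m add.commute)
  show "addp (z, 0) a = a" using m by (simp add: addp_def R_mod cr_def)
  show "addp (negp a) a = (z, 0)"
  proof -
    have e1: "((- snd a) mod q + snd a) mod q = 0" by (simp add: mod_add_left_eq)
    have e2: "((- snd a) mod q + snd a) div q = (snd a + (- snd a) mod q) div q" by (simp add: add.commute)
    show ?thesis using m by (simp add: addp_def negp_def e1 e2 Hg.ac3)
  qed
  show "addp (addp a b) c = addp a (addp b c)"
  proof -
    have e1: "((snd a + snd b) mod q + snd c) mod q = (snd a + (snd b + snd c) mod q) mod q"
      by (simp add: mod_add_left_eq mod_add_right_eq add.assoc)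
    have e2: "(snd a + snd b) div q + ((snd a + snd b) mod q + snd c) div q
        = (snd b + snd c) div q + (snd a + (snd b + snd c) mod q) div q"
      using int_divsplit[of "snd a + snd b" q "snd c"] int_divsplit[of "snd b + snd c" q "snd a"]
      by (simp add: add.commute add.left_commute)
    have "p (cr ((snd a + snd b) div q)) (cr (((snd a + snd b) mod q + snd c) div q))
        = p (cr ((snd b + snd c) div q)) (cr ((snd a + (snd b + snd c) mod q) div q))"
      unfolding cr_def by (simp flip: Hg.hm_add add: e2)
    then show ?thesis using m
      by (simp add: addp_def e1 Hg.ac1 Hg.ac2)
  qed
qed

end


context stp begin

definition "L' = {(fst l + gA.hm k t, (snd l, k)) | l k. l \<in> L \<and> k \<in> R}"

lemma L'_mem: "l \<in> L \<Longrightarrow> k \<in> R \<Longrightarrow> (fst l + gA.hm k t, (snd l, k)) \<in> L'"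
  unfolding L'_def by blast

lemma L'_E: assumes "a \<in> L'" obtains l k where "l \<in> L" "k \<in> R" "a = (fst l + gA.hm k t, (snd l, k))"
  using assms unfolding L'_def by blast

lemma hm_sum: "gA.hm a t + gA.hm b t = gA.hm (a + b) t" by (simp add: gA.hm_add)

lemma L'_add: assumes "a \<in> L'" "b \<in> L'" shows "(fst a + fst b, addp (snd a) (snd b)) \<in> L'"
proof -
  obtain l1 k1 where 1: "l1 \<in> L" "k1 \<in> R" "a = (fst l1 + gA.hm k1 t, (snd l1, k1))" using assms(1) by (rule L'_E)
  obtain l2 k2 where 2: "l2 \<in> L" "k2 \<in> R" "b = (fst l2 + gA.hm k2 t, (snd l2, k2))" using assms(2) by (rule L'_E)
  define j where "j = (k1 + k2) div q"
  define r where "r = (k1 + k2) mod q"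
  have jr: "j * q + r = k1 + k2" unfolding j_def r_def by (rule div_mult_mod_eq)
  define l where "l = (fst l1 + fst l2 + gA.hm (j*q) t, p (p (snd l1) (snd l2)) (cr j))"
  have "l \<in> L" using cu(4)[OF cu(4)[OF 1(1) 2(1)] jq_L[of j]] by (simp add: l_def)
  from L'_mem[OF this mod_R[of "k1+k2"]]
  have "(fst l + gA.hm r t, (snd l, r)) \<in> L'" by (simp add: r_def)
  moreover have "fst l + gA.hm r t = fst a + fst b"
  proof -
    have "fst l + gA.hm r t = fst l1 + fst l2 + gA.hm (j*q + r) t"
      by (simp add: l_def flip: hm_sum add.assoc)
    also have "\<dots> = fst a + fst b" using 1 2 jr by (simp add: gA.hm_add algebra_simps)
    finally show ?thesis .
  qed
  moreover have "(snd l, r) = addp (snd a) (snd b)" using 1 2 by (simp add: addp_def l_def j_def r_def)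
  ultimately show ?thesis by simp
qed

lemma L'_neg: assumes "a \<in> L'" shows "(- fst a, negp (snd a)) \<in> L'"
proof -
  obtain l k where 1: "l \<in> L" "k \<in> R" "a = (fst l + gA.hm k t, (snd l, k))" using assms by (rule L'_E)
  define j where "j = (k + (- k) mod q) div q"
  define r where "r = (- k) mod q"
  have "(k + (- k) mod q) mod q = 0" by (simp add: mod_add_right_eq)
  then have jr: "j * q = k + r" using div_mult_mod_eq[of "k + (- k) mod q" q] by (simp add: j_def r_def)
  define l2 where "l2 = (- fst l - gA.hm (j*q) t, p (n (snd l)) (n (cr j)))"
  have "l2 \<in> L" using cu(4)[OF cu(5)[OF 1(1)] cu(5)[OF jq_L[of j]]] by (simp add: l2_def)
  from L'_mem[OF this mod_R[of "- k"]]
  have "(fst l2 + gA.hm r t, (snd l2, r)) \<in> L'" by (simp add: r_def)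
  moreover have "fst l2 + gA.hm r t = - fst a"
  proof -
    have "gA.hm (j*q) t = gA.hm k t + gA.hm r t" using jr by (simp add: gA.hm_add)
    then show ?thesis using 1 by (simp add: l2_def algebra_simps)
  qed
  moreover have "(snd l2, r) = negp (snd a)" using 1 by (simp add: negp_def l2_def j_def r_def)
  ultimately show ?thesis by simp
qed

lemma L'_inj: "inj_on fst L'"
proof (rule inj_onI)
  fix a b assume ab: "a \<in> L'" "b \<in> L'" "fst a = fst b"
  obtain l1 k1 where 1: "l1 \<in> L" "k1 \<in> R" "a = (fst l1 + gA.hm k1 t, (snd l1, k1))" using ab(1) by (rule L'_E)
  obtain l2 k2 where 2: "l2 \<in> L" "k2 \<in> R" "b = (fst l2 + gA.hm k2 t, (snd l2, k2))" using ab(2) by (rule L'_E)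
  have "gA.hm (k1 - k2) t = fst l2 - fst l1"
    using ab(3) 1 2 gA.hm_add[of t "k1 - k2" k2] by (simp add: algebra_simps)
  also have "\<dots> \<in> fst ` L" using addL[of "fst l2" "- fst l1"] negL 1 2 by auto
  finally have "k1 = k2" using R_eq 1 2 by blast
  then have "fst l1 = fst l2" using ab(3) 1 2 by simp
  then have "l1 = l2" using cu(8) 1 2 by (meson inj_onD)
  then show "a = b" using 1 2 \<open>k1 = k2\<close> by simp
qed

end


context stp begin

lemma L'_sub: "L' \<subseteq> UNIV \<times> (C \<times> R)"
  using cu(2) by (auto simp: L'_def)

lemma L'_discrete: assumes "a \<in> L'"
  shows "\<exists>U. openin (prod_topology (euclidean::'g topology) TT) U \<and> U \<inter> L' = {a}"
proof -
  obtain l k where 1: "l \<in> L" "k \<in> R" "a = (fst l + gA.hm k t, (snd l, k))" using assms by (rule L'_E)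
  obtain U where U: "openin (prod_topology euclidean T) U" "U \<inter> L = {l}" using cu(6)[OF 1(1)] by blast
  define \<psi> where "\<psi> = (\<lambda>y::'g \<times> ('a \<times> int). (fst y - gA.hm k t, fst (snd y)))"
  have c1: "continuous_map (prod_topology euclidean TT) (prod_topology euclidean T) \<psi>"
  proof -
    have h: "continuous_map (euclidean::'g topology) euclidean (\<lambda>g. g - gA.hm k t)"
      by (simp add: continuous_on_diff continuous_on_id continuous_on_const)
    have f: "continuous_map (prod_topology euclidean TT) euclidean (\<lambda>y::'g \<times> ('a \<times> int). fst y - gA.hm k t)"
      using continuous_map_compose[OF continuous_map_fst h] by (simp only: o_def)
    have s: "continuous_map (prod_topology euclidean TT) T (\<lambda>y::'g \<times> ('a \<times> int). fst (snd y))"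
      using continuous_map_compose[OF continuous_map_snd continuous_map_fst[of T "discrete_topology R"]]
      by (simp add: o_def TT_def)
    show ?thesis unfolding \<psi>_def using f s by (intro continuous_map_pairedI)
  qed
  have c2: "continuous_map (prod_topology euclidean TT) (discrete_topology R) (\<lambda>y::'g \<times> ('a \<times> int). snd (snd y))"
    using continuous_map_compose[OF continuous_map_snd continuous_map_snd[of T "discrete_topology R"]]
    by (simp add: o_def TT_def)
  define U' where "U' = {y \<in> topspace (prod_topology euclidean TT). \<psi> y \<in> U} \<inter>
     {y \<in> topspace (prod_topology euclidean TT). snd (snd y) \<in> {k}}"
  have "openin (prod_topology euclidean TT) U'"
    unfolding U'_def using 1(2)
    by (intro openin_Int openin_continuous_map_preimage[OF c1 U(1)] openin_continuous_map_preimage[OF c2]) auto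
  moreover have "U' \<inter> L' = {a}"
  proof
    show "{a} \<subseteq> U' \<inter> L'"
    proof -
      have "snd l \<in> C" using 1 cu(2) by auto
      moreover have "\<psi> a = l" using 1 by (simp add: \<psi>_def)
      moreover have "l \<in> U" using U(2) by auto
      moreover have "a \<in> L'" using assms .
      ultimately show ?thesis using 1 by (auto simp: U'_def topTT)
    qed
    show "U' \<inter> L' \<subseteq> {a}"
    proof
      fix y assume y: "y \<in> U' \<inter> L'"
      obtain l2 k2 where 2: "l2 \<in> L" "k2 \<in> R" "y = (fst l2 + gA.hm k2 t, (snd l2, k2))" using y by (auto elim: L'_E)
      have "k2 = k" using y 2 by (simp add: U'_def)
      then have "\<psi> y = l2" using 2 by (simp add: \<psi>_def)
      then have "l2 \<in> U" using y by (simp add: U'_def)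
      then have "l2 = l" using U(2) 2 by auto
      then show "y \<in> {a}" using 1 2 \<open>k2 = k\<close> by simp
    qed
  qed
  ultimately show ?thesis by blast
qed

lemma L'_cocompact: "\<exists>K. compactin (prod_topology (euclidean::'g topology) TT) K \<and>
   {(fst k + fst l, addp (snd k) (snd l)) | k l. k \<in> K \<and> l \<in> L'} = UNIV \<times> (C \<times> R)"
proof -
  obtain K where K: "compactin (prod_topology euclidean T) K"
    "{(fst k + fst l, p (snd k) (snd l)) |k l. k \<in> K \<and> l \<in> L} = UNIV \<times> C"
    using cu(7) by blast
  have KC: "K \<subseteq> UNIV \<times> C" using compactin_subset_topspace[OF K(1)] by simp
  define \<iota> where "\<iota> = (\<lambda>y::'g \<times> 'a. (fst y, (snd y, 0::int)))"
  have "continuous_map (prod_topology euclidean T) (prod_topology euclidean TT) \<iota>"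
    unfolding \<iota>_def TT_def
    by (intro continuous_map_pairedI continuous_map_fst continuous_map_snd) auto
  then have cK: "compactin (prod_topology euclidean TT) (\<iota> ` K)" using K(1) image_compactin by blast
  have "{(fst k + fst l, addp (snd k) (snd l)) | k l. k \<in> \<iota> ` K \<and> l \<in> L'} = UNIV \<times> (C \<times> R)"
    (is "?A = ?B")
  proof
    show "?A \<subseteq> ?B"
    proof
      fix x assume "x \<in> ?A"
      then obtain k l where kl: "x = (fst k + fst l, addp (snd k) (snd l))" "k \<in> \<iota> ` K" "l \<in> L'" by blast
      then have "snd k \<in> C \<times> R" "snd l \<in> C \<times> R" using KC L'_sub by (auto simp: \<iota>_def)
      then show "x \<in> ?B" using kl by (auto simp: addp_def)
    qed
    show "?B \<subseteq> ?A"
    proof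
      fix x assume "x \<in> ?B"
      then obtain g h a where x: "x = (g, (h, a))" "h \<in> C" "a \<in> R" by auto
      then have "(g - gA.hm a t, h) \<in> UNIV \<times> C" by simp
      then obtain kk ll where kl: "kk \<in> K" "ll \<in> L" "(g - gA.hm a t, h) = (fst kk + fst ll, p (snd kk) (snd ll))"
        using K(2) by blast
      have mem: "(fst ll + gA.hm a t, (snd ll, a)) \<in> L'" using L'_mem[OF kl(2) x(3)] .
      have "snd kk \<in> C" "snd ll \<in> C" using KC kl cu(2) by auto
      then have "x = (fst (\<iota> kk) + fst (fst ll + gA.hm a t, (snd ll, a)), addp (snd (\<iota> kk)) (snd (fst ll + gA.hm a t, (snd ll, a))))"
        using x kl(3) R_mod[OF x(3)] by (auto simp: \<iota>_def addp_def cr_def algebra_simps)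
      then show "x \<in> ?A" using mem kl(1) by blast
    qed
  qed
  then show ?thesis using cK by blast
qed

lemma L'_dense: "TT closure_of (snd ` L') = C \<times> R"
proof -
  have "snd ` L' = snd ` L \<times> R"
  proof
    show "snd ` L' \<subseteq> snd ` L \<times> R" by (force simp: L'_def)
    show "snd ` L \<times> R \<subseteq> snd ` L'"
    proof
      fix y assume "y \<in> snd ` L \<times> R"
      then obtain l k where "l \<in> L" "k \<in> R" "y = (snd l, k)" by auto
      then show "y \<in> snd ` L'" using L'_mem[of l k] by (auto intro!: image_eqI)
    qed
  qed
  then show ?thesis using cu(9) by (simp add: TT_def closure_of_Times discrete_topology_closure_of)
qed

lemma cps': "cps H' L'"
  unfolding cps_def Let_def
proof (intro conjI)
  show "lca_group H'" by (rule lg')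
  show "L' \<subseteq> UNIV \<times> topspace (lca_top H')" using L'_sub by (simp add: H'_def topTT)
  show "(0, lca_zero H') \<in> L'" using L'_mem[OF cu(3) zero_R] by (simp add: H'_def)
  show "\<forall>a\<in>L'. \<forall>b\<in>L'. (fst a + fst b, lca_add H' (snd a) (snd b)) \<in> L'"
    using L'_add by (simp add: H'_def)
  show "\<forall>a\<in>L'. (- fst a, lca_neg H' (snd a)) \<in> L'"
    using L'_neg by (simp add: H'_def)
  show "\<forall>a\<in>L'. \<exists>U. openin (prod_topology euclidean (lca_top H')) U \<and> U \<inter> L' = {a}"
    using L'_discrete by (simp add: H'_def)
  show "\<exists>K. compactin (prod_topology euclidean (lca_top H')) K \<and>
     {(fst k + fst l, lca_add H' (snd k) (snd l)) |k l. k \<in> K \<and> l \<in> L'} = UNIV \<times> topspace (lca_top H')"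
    using L'_cocompact by (simp add: H'_def topTT)
  show "inj_on fst L'" by (rule L'_inj)
  show "lca_top H' closure_of snd ` L' = topspace (lca_top H')"
    using L'_dense by (simp add: H'_def topTT)
qed

end


context stp begin

lemma step:
  assumes W: "W \<subseteq> C" "compactin T (T closure_of W)" "T interior_of W \<noteq> {}" "\<Lambda> \<subseteq> model_set L W"
  shows "subset_of_model_set TYPE('a \<times> int) (\<Lambda> \<union> {x + t | x. x \<in> \<Lambda>})"
proof -
  define j1 where "j1 = 1 div q"
  define r1 where "r1 = 1 mod q"
  define \<sigma> where "\<sigma> = cr j1"
  define \<tau> where "\<tau> = (\<lambda>w. p w \<sigma>)"
  define W' where "W' = W \<times> {0::int} \<union> (\<tau> ` W) \<times> {r1}"
  have \<sigma>C: "\<sigma> \<in> C" by (simp add: \<sigma>_def)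
  have r1R: "r1 \<in> R" by (simp add: r1_def)
  have hmt: "homeomorphic_maps T T \<tau> (\<lambda>w. p w (n \<sigma>))"
    unfolding homeomorphic_maps_def \<tau>_def
    using transl_cont[OF \<sigma>C] transl_cont[OF Hg.nC[OF \<sigma>C]] \<sigma>C
    by (simp add: Hg.assoc)
  then have hm\<tau>: "homeomorphic_map T T \<tau>" using homeomorphic_maps_imp_map by blast
  have clW: "T closure_of W \<subseteq> C" by (rule closure_of_subset_topspace)
  have cl\<tau>: "T closure_of (\<tau> ` W) = \<tau> ` (T closure_of W)"
    using homeomorphic_map_closure_of[OF hm\<tau> W(1)] .
  have cpt\<tau>: "compactin T (\<tau> ` (T closure_of W))"
    using homeomorphic_map_compactness[OF hm\<tau> clW] W(2) by simp
  have sub: "W' \<subseteq> topspace (lca_top H')"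
    using W(1) r1R \<sigma>C by (auto simp: W'_def H'_def topTT \<tau>_def)
  have clW': "lca_top H' closure_of W' = (T closure_of W) \<times> {0} \<union> (\<tau> ` (T closure_of W)) \<times> {r1}"
    using r1R by (simp add: H'_def TT_def W'_def closure_of_Times discrete_topology_closure_of cl\<tau>)
  have cptW': "compactin (lca_top H') (lca_top H' closure_of W')"
    unfolding clW' using W(2) cpt\<tau> r1R
    by (intro compactin_Un) (auto simp: H'_def TT_def compactin_Times)
  have "lca_top H' interior_of (W \<times> {0}) \<subseteq> lca_top H' interior_of W'"
    by (rule interior_of_mono) (auto simp: W'_def)
  moreover have "lca_top H' interior_of (W \<times> {0}) = (T interior_of W) \<times> {0}"
    by (simp add: H'_def TT_def interior_of_Times)
  ultimately have intW': "lca_top H' interior_of W' \<noteq> {}" using W(3) by auto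
  have model: "\<Lambda> \<union> {x + t | x. x \<in> \<Lambda>} \<subseteq> model_set L' W'"
  proof
    fix y assume y: "y \<in> \<Lambda> \<union> {x + t | x. x \<in> \<Lambda>}"
    then obtain x where x: "x \<in> \<Lambda>" "y = x \<or> y = x + t" by blast
    then have "x \<in> model_set L W" using W(4) by blast
    then obtain l where l: "l \<in> L" "fst l = x" "star_map L x \<in> W" by (rule model_set_memD)
    have sl: "snd l \<in> W" using l star_map_eq[OF l(1) cu(8)] by simp
    show "y \<in> model_set L' W'"
    proof (cases "y = x")
      case True
      have P: "(fst l + gA.hm 0 t, (snd l, 0)) \<in> L'" using L'_mem[OF l(1) zero_R] .
      have "fst (fst l + gA.hm 0 t, (snd l, 0::int)) \<in> model_set L' W'"
        using model_set_memI[OF P L'_inj] sl by (simp add: W'_def)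
      then show ?thesis using True l by simp
    next
      case False
      then have yx: "y = x + t" using x by blast
      define l2 where "l2 = (fst l + gA.hm (j1 * q) t, p (snd l) (cr j1))"
      have l2L: "l2 \<in> L" using cu(4)[OF l(1) jq_L[of j1]] by (simp add: l2_def)
      have P: "(fst l2 + gA.hm r1 t, (snd l2, r1)) \<in> L'" using L'_mem[OF l2L r1R] .
      have "snd (fst l2 + gA.hm r1 t, (snd l2, r1)) \<in> W'"
        using sl by (simp add: W'_def l2_def \<tau>_def \<sigma>_def)
      then have "fst (fst l2 + gA.hm r1 t, (snd l2, r1)) \<in> model_set L' W'"
        using model_set_memI[OF P L'_inj] by blast
      moreover have "fst l2 + gA.hm r1 t = y"
      proof -
        have "j1 * q + r1 = 1" unfolding j1_def r1_def by (rule div_mult_mod_eq)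
        then have "gA.hm (j1 * q) t + gA.hm r1 t = t" using gA.hm_add[of t "j1*q" r1] by simp
        then show ?thesis using yx l(2) by (simp add: l2_def add.assoc)
      qed
      ultimately show ?thesis by simp
    qed
  qed
  show ?thesis
    unfolding subset_of_model_set_def
    using cps' sub cptW' intW' model by blast
qed

end

lemma step_global:
  fixes \<Lambda> :: "'g::{topological_ab_group_add,t2_space} set"
  assumes "subset_of_model_set TYPE('a) \<Lambda>"
  shows "subset_of_model_set TYPE('a \<times> int) (\<Lambda> \<union> {x + t | x. x \<in> \<Lambda>})"
proof -
  obtain H :: "'a lca_data" and L :: "('g \<times> 'a) set" and W where
    h: "cps H L" "W \<subseteq> topspace (lca_top H)"
        "compactin (lca_top H) ((lca_top H) closure_of W)"
        "(lca_top H) interior_of W \<noteq> {}" "\<Lambda> \<subseteq> model_set L W"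
    using assms unfolding subset_of_model_set_def by blast
  interpret stp H L t by unfold_locales (rule h(1))
  show ?thesis using step[OF h(2-5)] .
qed

lemma big_step:
  fixes \<Lambda> :: "'g::{topological_ab_group_add,t2_space} set"
  assumes "subset_of_model_set TYPE(('g \<Rightarrow> real) set) \<Lambda>"
  shows "subset_of_model_set TYPE(('g \<Rightarrow> real) set) (\<Lambda> \<union> {x + t | x. x \<in> \<Lambda>})"
  using to_big[OF step_global[OF assms]] .

lemma sums_finite:
  fixes F :: "'g::{topological_ab_group_add,t2_space} set"
  assumes "finite F" "F \<noteq> {}"
  shows "\<And>\<Lambda>. subset_of_model_set TYPE(('g \<Rightarrow> real) set) \<Lambda> \<Longrightarrow>
     subset_of_model_set TYPE(('g \<Rightarrow> real) set) {x + f | x f. x \<in> \<Lambda> \<and> f \<in> F}"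
  using assms
proof (induction F rule: finite_ne_induct)
  case (singleton t)
  show ?case
    by (rule subset_of_model_set_mono[OF big_step[OF singleton, of t]]) auto
next
  case (insert t F)
  define \<Lambda>2 where "\<Lambda>2 = {x + f | x f. x \<in> \<Lambda> \<and> f \<in> F}"
  have 1: "subset_of_model_set TYPE(('g \<Rightarrow> real) set) \<Lambda>2"
    using insert.IH[OF insert.prems] by (simp add: \<Lambda>2_def)
  obtain f0 where f0: "f0 \<in> F" using insert.hyps(2) by blast
  have 2: "subset_of_model_set TYPE(('g \<Rightarrow> real) set) (\<Lambda>2 \<union> {y + (t - f0) | y. y \<in> \<Lambda>2})"
    by (rule big_step[OF 1])
  show ?case
  proof (rule subset_of_model_set_mono[OF 2], rule subsetI)
    fix w assume "w \<in> {x + f |x f. x \<in> \<Lambda> \<and> f \<in> insert t F}"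
    then obtain x f where w: "w = x + f" "x \<in> \<Lambda>" "f \<in> insert t F" by blast
    show "w \<in> \<Lambda>2 \<union> {y + (t - f0) | y. y \<in> \<Lambda>2}"
    proof (cases "f = t")
      case True
      have "x + f0 \<in> \<Lambda>2" using w f0 by (auto simp: \<Lambda>2_def)
      moreover have "w = (x + f0) + (t - f0)" using w True by (simp add: algebra_simps)
      ultimately show ?thesis by blast
    next
      case False
      then have "w \<in> \<Lambda>2" using w by (auto simp: \<Lambda>2_def)
      then show ?thesis by blast
    qed
  qed
qed

theorem proposition6p17:
  fixes \<Lambda> F :: "'g::{topological_ab_group_add,t2_space} set"
  assumes "locally_compact_space (euclidean :: 'g topology)"
    and "\<exists>K :: nat \<Rightarrow> 'g set. (\<forall>n. compact (K n)) \<and> (\<Union>n. K n) = UNIV"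
    and "subset_of_model_set TYPE('u) \<Lambda>"
    and "finite F" and "F \<noteq> {}"
  shows "subset_of_model_set TYPE(('g \<Rightarrow> real) set) {x + f | x f. x \<in> \<Lambda> \<and> f \<in> F}"
  using sums_finite[OF assms(4,5) to_big[OF assms(3)]] .


end
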